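(* Let $f\colon\mathbb R\to\mathbb R$ be continuous with $|f(x)|\leqslant a\cosh(bx)$ for all $x$, for some $a>0$, $b\in\mathbb R$. Fix $\lambda>0$, let $P_n = e^{-\lambda}\lambda^n/n!$, and for $k\geqslant1$ let $h_k\colon y\mapsto f(y)/k$. Let $\mathbb P$ be the set of compactly supported Borel probability measures on $\mathbb R$ with the topology in which $\rho_n\to\rho$ iff $\int\phi\,d\rho_n\to\int\phi\,d\rho$ for all continuous compactly supported $\phi\colon\mathbb R\to\mathbb R$. For $x\in\mathbb R$ define the operators $$\Sigma^f_x(\rho) = \sum_{n=0}^\infty P_n\,(h_{n+1})_\star\big(\delta_x*\rho^{*n}\big),\qquad \Sigma^f(\rho) = \sum_{n=0}^\infty P_n\,(h_{n+1})_\star\big(\rho^{*(n+1)}\big),$$ where $(h_k)_\star$ is pushforward, $*$ is convolution and $\rho^{*0}=\delta_0$. Then $\Sigma^f_x$ and $\Sigma^f$ are continuous on $\mathbb P$ (with values in probability measures on $\mathbb R$ with the same weak topology).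
   Context: $\delta_a$ is the Dirac measure at $a$; $\cosh$ is the hyperbolic cosine. *)

theory Defs
  imports "HOL-Probability.Probability"
begin

primrec conv_pow :: "real measure \<Rightarrow> nat \<Rightarrow> real measure" where
  "conv_pow \<rho> 0 = return borel 0"
| "conv_pow \<rho> (Suc n) = convolution \<rho> (conv_pow \<rho> n)"

definition poisson_weight :: "real \<Rightarrow> nat \<Rightarrow> real" where
  "poisson_weight lam n = exp (- lam) * lam ^ n / fact n"

definition weighted_sum_measure :: "(nat \<Rightarrow> real) \<Rightarrow> (nat \<Rightarrow> real measure) \<Rightarrow> real measure" where
  "weighted_sum_measure w M =
     measure_of UNIV (sets borel) (\<lambda>A. \<Sum>n. ennreal (w n) * emeasure (M n) A)"

definition Sigma_x :: "(real \<Rightarrow> real) \<Rightarrow> real \<Rightarrow> real \<Rightarrow> real measure \<Rightarrow> real measure" where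
  "Sigma_x f lam x \<rho> = weighted_sum_measure (poisson_weight lam)
     (\<lambda>n. distr (convolution (return borel x) (conv_pow \<rho> n)) borel (\<lambda>y. f y / real (n + 1)))"

definition Sigma :: "(real \<Rightarrow> real) \<Rightarrow> real \<Rightarrow> real measure \<Rightarrow> real measure" where
  "Sigma f lam \<rho> = weighted_sum_measure (poisson_weight lam)
     (\<lambda>n. distr (conv_pow \<rho> (Suc n)) borel (\<lambda>y. f y / real (n + 1)))"

definition cs_prob :: "real measure set" where
  "cs_prob = {\<rho>. prob_space \<rho> \<and> sets \<rho> = sets borel \<and>
                  (\<exists>K. compact K \<and> K \<in> sets borel \<and> emeasure \<rho> K = 1)}"

definition cc_fun :: "(real \<Rightarrow> real) \<Rightarrow> bool" where
  "cc_fun \<phi> \<longleftrightarrow> continuous_on UNIV \<phi> \<and> (\<exists>K. compact K \<and> (\<forall>x. x \<notin> K \<longrightarrow> \<phi> x = 0))"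

definition vague_conv :: "(nat \<Rightarrow> real measure) \<Rightarrow> real measure \<Rightarrow> bool" where
  "vague_conv \<rho>s \<rho> \<longleftrightarrow>
     (\<forall>\<phi>. cc_fun \<phi> \<longrightarrow> (\<lambda>n. integral\<^sup>L (\<rho>s n) \<phi>) \<longlonglongrightarrow> integral\<^sup>L \<rho> \<phi>)"

end

theory Submission imports Defs begin

lemma rd_iff: "real_distribution M \<longleftrightarrow> prob_space M \<and> sets M = sets borel"
  by (auto simp: real_distribution_def real_distribution_axioms_def)

lemma real_distribution_conv:
  assumes "real_distribution M" "real_distribution N"
  shows "real_distribution (M \<star> N)"
proof -
  interpret M: real_distribution M by fact
  interpret N: real_distribution N by fact
  interpret P: pair_prob_space M N ..
  have "prob_space (distr (M \<Otimes>\<^sub>M N) borel (\<lambda>(x, y). x + y))"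
    by (rule P.prob_space_distr) measurable
  then show ?thesis unfolding rd_iff convolution_def by simp
qed

lemma real_distribution_conv_pow:
  assumes "real_distribution \<rho>" shows "real_distribution (conv_pow \<rho> n)"
  by (induction n) (auto simp: rd_iff prob_space_return real_distribution_conv[OF assms, unfolded rd_iff])

lemma char_conv:
  assumes "real_distribution M" "real_distribution N"
  shows "char (M \<star> N) t = char M t * char N t"
proof -
  interpret M: real_distribution M by fact
  interpret N: real_distribution N by fact
  interpret P: pair_prob_space M N ..
  have int: "integrable (M \<Otimes>\<^sub>M N) (\<lambda>(x, y). iexp (t * x) * iexp (t * y))"
    by (rule P.integrable_const_bound[where B=1]) (auto simp: norm_mult)
  have "char (M \<star> N) t = (\<integral>z. iexp (t * ((\<lambda>(x,y). x + y) z)) \<partial>(M \<Otimes>\<^sub>M N))"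
    unfolding char_def convolution_def by (subst integral_distr) auto
  also have "\<dots> = (\<integral>z. (\<lambda>(x,y). iexp (t * x) * iexp (t * y)) z \<partial>(M \<Otimes>\<^sub>M N))"
    by (intro Bochner_Integration.integral_cong) (auto simp: distrib_left mult_exp_exp algebra_simps)
  also have "\<dots> = (\<integral>x. (\<integral>y. iexp (t * x) * iexp (t * y) \<partial>N) \<partial>M)"
    using P.integral_fst'[OF int] by simp
  also have "\<dots> = (\<integral>x. iexp (t * x) * char N t \<partial>M)"
    unfolding char_def by simp
  also have "\<dots> = char M t * char N t"
    unfolding char_def by simp
  finally show ?thesis .
qed

lemma meas_rd: "sets M = sets borel \<Longrightarrow> continuous_on UNIV h \<Longrightarrow> h \<in> borel_measurable M"
  using borel_measurable_continuous_onI measurable_cong_sets by blast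

lemma integrable_rd:
  fixes g :: "real \<Rightarrow> real"
  assumes "real_distribution M" "continuous_on UNIV g" "\<And>x. \<bar>g x\<bar> \<le> B"
  shows "integrable M g"
proof -
  interpret real_distribution M by fact
  show ?thesis
    by (rule integrable_const_bound[where B=B]) (auto intro!: meas_rd assms)
qed

definition bweak :: "(nat \<Rightarrow> real measure) \<Rightarrow> real measure \<Rightarrow> bool" where
  "bweak Ms M \<longleftrightarrow> (\<forall>(g::real\<Rightarrow>real) B. continuous_on UNIV g \<longrightarrow> (\<forall>x. \<bar>g x\<bar> \<le> B) \<longrightarrow>
      (\<lambda>n. integral\<^sup>L (Ms n) g) \<longlonglongrightarrow> integral\<^sup>L M g)"

lemma cont_UNIV_iff: "continuous_on UNIV g \<longleftrightarrow> (\<forall>x. isCont g x)"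
  by (simp add: continuous_on_eq_continuous_at)

lemma weak_imp_bweak:
  assumes "\<And>n. real_distribution (Ms n)" "real_distribution M" "weak_conv_m Ms M"
  shows "bweak Ms M"
  unfolding bweak_def
proof (intro allI impI)
  fix g :: "real \<Rightarrow> real" and B
  assume "continuous_on UNIV g" "\<forall>x. \<bar>g x\<bar> \<le> B"
  then show "(\<lambda>n. integral\<^sup>L (Ms n) g) \<longlonglongrightarrow> integral\<^sup>L M g"
    by (intro weak_conv_imp_integral_bdd_continuous_conv[OF assms, where B=B]) (auto simp: cont_UNIV_iff)
qed

lemma bweak_imp_weak:
  assumes "\<And>n. real_distribution (Ms n)" "real_distribution M" "bweak Ms M"
  shows "weak_conv_m Ms M"
  apply (rule integral_bdd_continuous_conv_imp_weak_conv[OF assms(1,2)])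
  using assms(3) unfolding bweak_def cont_UNIV_iff by blast

lemma weak_conv_conv:
  assumes "\<And>k. real_distribution (Ms k)" "real_distribution M"
    "\<And>k. real_distribution (Ns k)" "real_distribution N"
    "weak_conv_m Ms M" "weak_conv_m Ns N"
  shows "weak_conv_m (\<lambda>k. Ms k \<star> Ns k) (M \<star> N)"
  using assms
  by (intro levy_continuity) (auto simp: char_conv intro!: tendsto_mult levy_continuity1 real_distribution_conv)

lemma weak_conv_conv_pow:
  assumes "\<And>k. real_distribution (\<rho>s k)" "real_distribution \<rho>" "weak_conv_m \<rho>s \<rho>"
  shows "weak_conv_m (\<lambda>k. conv_pow (\<rho>s k) n) (conv_pow \<rho> n)"
proof (induction n)
  case 0
  then show ?case by (simp add: weak_conv_m_def weak_conv_def)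
next
  case (Suc n)
  then show ?case
    by (simp, intro weak_conv_conv assms real_distribution_conv_pow)
qed

lemma weak_conv_distr:
  assumes "\<And>k. real_distribution (Ms k)" "real_distribution M" "weak_conv_m Ms M"
    and h: "continuous_on UNIV h"
  shows "weak_conv_m (\<lambda>k. distr (Ms k) borel h) (distr M borel h)"
proof -
  have rd: "real_distribution (distr N borel h)" if "real_distribution N" for N
  proof -
    interpret real_distribution N by fact
    show ?thesis unfolding rd_iff
      by (auto intro!: prob_space_distr meas_rd h)
  qed
  have bw: "bweak Ms M" by (rule weak_imp_bweak[OF assms(1-3)])
  show ?thesis
  proof (rule bweak_imp_weak)
    show "bweak (\<lambda>k. distr (Ms k) borel h) (distr M borel h)"
      unfolding bweak_def
    proof (intro allI impI)
      fix g :: "real \<Rightarrow> real" and B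
      assume g: "continuous_on UNIV g" "\<forall>x. \<bar>g x\<bar> \<le> B"
      have "continuous_on UNIV (\<lambda>x. g (h x))"
        using g(1) h by (metis continuous_on_compose2 subset_UNIV)
      then have "(\<lambda>k. integral\<^sup>L (Ms k) (\<lambda>x. g (h x))) \<longlonglongrightarrow> integral\<^sup>L M (\<lambda>x. g (h x))"
        using bw g(2) unfolding bweak_def by blast
      moreover have "integral\<^sup>L (distr N borel h) g = integral\<^sup>L N (\<lambda>x. g (h x))"
        if "real_distribution N" for N
        using that g(1) h
        by (subst integral_distr) (auto intro!: meas_rd borel_measurable_continuous_onI simp: rd_iff)
      ultimately show "(\<lambda>k. integral\<^sup>L (distr (Ms k) borel h) g) \<longlonglongrightarrow> integral\<^sup>L (distr M borel h) g"
        using assms(1,2) by simp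
    qed
  qed (auto intro!: rd assms)
qed

lemma cc_fun_bounded:
  assumes "cc_fun \<phi>" shows "\<exists>B. \<forall>x. \<bar>\<phi> x\<bar> \<le> B"
proof -
  from assms obtain K where c: "continuous_on UNIV \<phi>" and K: "compact K" "\<forall>x. x \<notin> K \<longrightarrow> \<phi> x = 0"
    unfolding cc_fun_def by blast
  have "compact (\<phi> ` K)"
    by (rule compact_continuous_image[OF continuous_on_subset[OF c] K(1)]) auto
  then obtain B where "\<forall>y\<in>\<phi> ` K. \<bar>y\<bar> \<le> B"
    using compact_imp_bounded bounded_real by blast
  then have "\<forall>x. \<bar>\<phi> x\<bar> \<le> max B 0" using K(2) by (metis abs_zero image_eqI max.coboundedI1 max.cobounded2)
  then show ?thesis by blast
qed

lemma cs_prob_rd: "\<rho> \<in> cs_prob \<Longrightarrow> real_distribution \<rho>"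
  by (simp add: cs_prob_def rd_iff)

lemma vague_imp_bweak:
  assumes rs: "\<And>n. \<rho>s n \<in> cs_prob" and r: "\<rho> \<in> cs_prob" and v: "vague_conv \<rho>s \<rho>"
  shows "bweak \<rho>s \<rho>"
proof -
  have rdn: "real_distribution (\<rho>s n)" for n using rs cs_prob_rd by blast
  have rd: "real_distribution \<rho>" using r cs_prob_rd by blast
  from r obtain K where K: "compact K" "K \<in> sets borel" "emeasure \<rho> K = 1"
    unfolding cs_prob_def by blast
  obtain R where R: "\<forall>x\<in>K. \<bar>x\<bar> \<le> R" using compact_imp_bounded[OF K(1)] bounded_real by blast
  define \<psi> where "\<psi> x = max 0 (min 1 (R + 1 - \<bar>x\<bar>))" for x :: real
  have \<psi>c: "continuous_on UNIV \<psi>" unfolding \<psi>_def by (intro continuous_intros)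
  have \<psi>b: "0 \<le> \<psi> x" "\<psi> x \<le> 1" for x unfolding \<psi>_def by auto
  have \<psi>K: "\<psi> x = 1" if "x \<in> K" for x using R that unfolding \<psi>_def by force
  have cc: "cc_fun (\<lambda>x. g x * \<psi> x)" if "continuous_on UNIV g" for g
    unfolding cc_fun_def
  proof (intro conjI exI[of _ "{-R-1..R+1}"] allI impI)
    show "continuous_on UNIV (\<lambda>x. g x * \<psi> x)" using that \<psi>c by (intro continuous_intros)
  next
    fix x assume "x \<notin> {- R - 1..R + 1}"
    then show "g x * \<psi> x = 0" unfolding \<psi>_def by auto
  qed auto
  interpret P: real_distribution \<rho> by (rule rd)
  have AEK: "AE x in \<rho>. x \<in> K"
    using K by (intro P.AE_prob_1) (auto simp: P.emeasure_eq_measure)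
  show ?thesis unfolding bweak_def
  proof (intro allI impI)
    fix g :: "real \<Rightarrow> real" and B
    assume g: "continuous_on UNIV g" "\<forall>x. \<bar>g x\<bar> \<le> B"
    have B0: "0 \<le> B" using g(2) by (meson abs_ge_zero order_trans)
    have int1: "integrable (\<rho>s n) g" for n using integrable_rd[OF rdn g(1)] g(2) by blast
    have int2: "integrable (\<rho>s n) (\<lambda>x. g x * \<psi> x)" for n
      apply (rule integrable_rd[OF rdn, where B=B])
      using g \<psi>c \<psi>b apply (auto intro!: continuous_intros simp: abs_mult)
      by (metis abs_of_nonneg mult_le_one mult.commute mult_left_le \<psi>b abs_ge_zero order_trans B0)
    have int3: "integrable (\<rho>s n) \<psi>" for n
      by (rule integrable_rd[OF rdn \<psi>c, where B=1]) (use \<psi>b in auto)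
    have lim1: "(\<lambda>n. integral\<^sup>L (\<rho>s n) (\<lambda>x. g x * \<psi> x)) \<longlonglongrightarrow> integral\<^sup>L \<rho> (\<lambda>x. g x * \<psi> x)"
      using v cc[OF g(1)] unfolding vague_conv_def by blast
    have e1: "integral\<^sup>L \<rho> (\<lambda>x. g x * \<psi> x) = integral\<^sup>L \<rho> g"
      using AEK \<psi>K by (intro integral_cong_AE) (auto intro!: continuous_intros meas_rd g \<psi>c)
    have lim2: "(\<lambda>n. integral\<^sup>L (\<rho>s n) \<psi>) \<longlonglongrightarrow> integral\<^sup>L \<rho> \<psi>"
      using v cc[of "\<lambda>_. 1"] unfolding vague_conv_def by auto
    have e2: "integral\<^sup>L \<rho> \<psi> = 1"
    proof -
      have "integral\<^sup>L \<rho> \<psi> = integral\<^sup>L \<rho> (\<lambda>_. 1::real)"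
        using AEK \<psi>K by (intro integral_cong_AE) (auto intro!: meas_rd \<psi>c)
      then show ?thesis using P.prob_space P.space_eq_univ by simp
    qed
    define d where "d n = integral\<^sup>L (\<rho>s n) g - integral\<^sup>L (\<rho>s n) (\<lambda>x. g x * \<psi> x)" for n
    have dbound: "norm (d n) \<le> B * (1 - integral\<^sup>L (\<rho>s n) \<psi>)" for n
    proof -
      interpret Q: real_distribution "\<rho>s n" by (rule rdn)
      have "d n = integral\<^sup>L (\<rho>s n) (\<lambda>x. g x * (1 - \<psi> x))"
        unfolding d_def using int1 int2
        by (subst Bochner_Integration.integral_diff[symmetric]) (auto simp: algebra_simps)
      also have "norm \<dots> \<le> integral\<^sup>L (\<rho>s n) (\<lambda>x. norm (g x * (1 - \<psi> x)))"
        by (rule integral_norm_bound)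
      also have "\<dots> \<le> integral\<^sup>L (\<rho>s n) (\<lambda>x. B * (1 - \<psi> x))"
      proof (rule integral_mono)
        show "integrable (\<rho>s n) (\<lambda>x. norm (g x * (1 - \<psi> x)))"
          using int1 int2 by (auto simp: algebra_simps)
        show "integrable (\<rho>s n) (\<lambda>x. B * (1 - \<psi> x))"
          using int3 by auto
        fix x show "norm (g x * (1 - \<psi> x)) \<le> B * (1 - \<psi> x)"
          using g(2) \<psi>b[of x] by (auto simp: abs_mult intro!: mult_right_mono)
      qed
      also have "\<dots> = B * (1 - integral\<^sup>L (\<rho>s n) \<psi>)"
      proof -
        have pu: "measure (\<rho>s n) UNIV = 1" using Q.prob_space by simp
        have "integral\<^sup>L (\<rho>s n) (\<lambda>x. 1 - \<psi> x) = integral\<^sup>L (\<rho>s n) (\<lambda>x. 1) - integral\<^sup>L (\<rho>s n) \<psi>"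
          using int3[of n] by (intro Bochner_Integration.integral_diff) auto
        then show ?thesis using pu by simp
      qed
      finally show ?thesis .
    qed
    have "(\<lambda>n. B * (1 - integral\<^sup>L (\<rho>s n) \<psi>)) \<longlonglongrightarrow> B * (1 - 1)"
      by (intro tendsto_mult tendsto_const tendsto_diff lim2[unfolded e2])
    then have "(\<lambda>n. B * (1 - integral\<^sup>L (\<rho>s n) \<psi>)) \<longlonglongrightarrow> 0" by simp
    then have "d \<longlonglongrightarrow> 0"
      by (rule Lim_null_comparison[OF always_eventually[OF allI[OF dbound]]])
    then have "(\<lambda>n. integral\<^sup>L (\<rho>s n) (\<lambda>x. g x * \<psi> x) + d n) \<longlonglongrightarrow> integral\<^sup>L \<rho> g + 0"
      using lim1 unfolding e1 by (intro tendsto_add)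
    then show "(\<lambda>n. integral\<^sup>L (\<rho>s n) g) \<longlonglongrightarrow> integral\<^sup>L \<rho> g"
      by (simp add: d_def)
  qed
qed

lemma rd_distr: "real_distribution N \<Longrightarrow> continuous_on UNIV h \<Longrightarrow> real_distribution (distr N borel h)"
  unfolding rd_iff by (auto intro!: prob_space.prob_space_distr meas_rd)

lemma ws_bind:
  assumes lam: "0 < lam" and rd: "\<And>n. real_distribution (M n)"
  shows "weighted_sum_measure (poisson_weight lam) M = measure_pmf (poisson_pmf lam) \<bind> M"
    (is "_ = ?B")
proof -
  let ?N = "measure_pmf (poisson_pmf lam)"
  have meas: "M \<in> count_space UNIV \<rightarrow>\<^sub>M prob_algebra borel"
    using rd by (auto simp: space_prob_algebra rd_iff)
  have Nsp: "?N \<in> space (prob_algebra (count_space UNIV))"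
    by (auto simp: space_prob_algebra prob_space_measure_pmf)
  have sB: "sets ?B = sets borel" by (rule sets_bind'[OF Nsp meas])
  have spB: "space ?B = UNIV" using sets_eq_imp_space_eq[OF sB] by simp
  have em: "emeasure ?B A = (\<Sum>n. ennreal (poisson_weight lam n) * emeasure (M n) A)"
    if "A \<in> sets borel" for A
  proof -
    have "emeasure ?B A = (\<integral>\<^sup>+n. emeasure (M n) A \<partial>?N)"
      by (rule emeasure_bind_prob_algebra[OF Nsp meas that])
    also have "\<dots> = (\<Sum>n. ennreal (pmf (poisson_pmf lam) n) * emeasure (M n) A)"
      by (simp add: nn_integral_measure_pmf nn_integral_count_space_nat)
    also have "\<dots> = (\<Sum>n. ennreal (poisson_weight lam n) * emeasure (M n) A)"
      by (simp add: pmf_poisson[OF lam] poisson_weight_def mult_ac)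
    finally show ?thesis .
  qed
  have "weighted_sum_measure (poisson_weight lam) M = measure_of UNIV (sets borel) (emeasure ?B)"
    unfolding weighted_sum_measure_def
  proof (rule measure_of_eq)
    show "sets borel \<subseteq> Pow UNIV" by simp
    fix A :: "real set" assume "A \<in> sigma_sets UNIV (sets borel)"
    then have "A \<in> sets borel" by (metis sets.sigma_sets_eq space_borel)
    then show "(\<Sum>n. ennreal (poisson_weight lam n) * emeasure (M n) A) = emeasure ?B A"
      using em by simp
  qed
  also have "\<dots> = measure_of (space ?B) (sets ?B) (emeasure ?B)" using sB spB by simp
  also have "\<dots> = ?B" by (rule measure_of_of_measure)
  finally show ?thesis .
qed

lemma ws_rd:
  assumes lam: "0 < lam" and rd: "\<And>n. real_distribution (M n)"
  shows "real_distribution (weighted_sum_measure (poisson_weight lam) M)"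
proof -
  let ?N = "measure_pmf (poisson_pmf lam)"
  have meas: "M \<in> count_space UNIV \<rightarrow>\<^sub>M prob_algebra borel"
    using rd by (auto simp: space_prob_algebra rd_iff)
  have Nsp: "?N \<in> space (prob_algebra (count_space UNIV))"
    by (auto simp: space_prob_algebra prob_space_measure_pmf)
  show ?thesis unfolding ws_bind[OF assms] rd_iff
    using sets_bind'[OF Nsp meas] prob_space_bind'[OF Nsp meas] by simp
qed

lemma ws_integral:
  fixes \<phi> :: "real \<Rightarrow> real"
  assumes lam: "0 < lam" and rd: "\<And>n. real_distribution (M n)"
    and c: "continuous_on UNIV \<phi>" and b: "\<And>x. \<bar>\<phi> x\<bar> \<le> B"
  shows "integral\<^sup>L (weighted_sum_measure (poisson_weight lam) M) \<phi>
       = (\<integral>n. integral\<^sup>L (M n) \<phi> \<partial>measure_pmf (poisson_pmf lam))"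
  unfolding ws_bind[OF assms(1,2)]
proof (rule integral_bind[where K=borel and B=B and B'=1])
  show "\<phi> \<in> borel_measurable borel" by (rule borel_measurable_continuous_onI[OF c])
  show "\<And>x. x \<in> space borel \<Longrightarrow> \<bar>\<phi> x\<bar> \<le> B" using b by simp
  show "M \<in> measure_pmf (poisson_pmf lam) \<rightarrow>\<^sub>M subprob_algebra borel"
    using rd by (auto simp: space_subprob_algebra rd_iff intro: prob_space_imp_subprob_space)
  show "finite_measure (measure_pmf (poisson_pmf lam))"
    by (rule prob_space.finite_measure[OF prob_space_measure_pmf])
  show "AE x in measure_pmf (poisson_pmf lam). emeasure (M x) (space (M x)) \<le> ennreal 1"
    using rd by (intro AE_I2) (auto simp: rd_iff prob_space.emeasure_space_1)
qed

lemma ws_conv: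
  assumes lam: "0 < lam" and rdk: "\<And>k n. real_distribution (Ms k n)"
    and rd: "\<And>n. real_distribution (M n)"
    and w: "\<And>n. weak_conv_m (\<lambda>k. Ms k n) (M n)"
  shows "vague_conv (\<lambda>k. weighted_sum_measure (poisson_weight lam) (Ms k))
                    (weighted_sum_measure (poisson_weight lam) M)"
  unfolding vague_conv_def
proof (intro allI impI)
  fix \<phi> assume cc: "cc_fun \<phi>"
  obtain B where b: "\<And>x. \<bar>\<phi> x\<bar> \<le> B" using cc_fun_bounded[OF cc] by blast
  have c: "continuous_on UNIV \<phi>" using cc cc_fun_def by blast
  let ?N = "measure_pmf (poisson_pmf lam)"
  have lim: "(\<lambda>k. integral\<^sup>L (Ms k n) \<phi>) \<longlonglongrightarrow> integral\<^sup>L (M n) \<phi>" for n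
    using weak_imp_bweak[OF rdk rd w] c b unfolding bweak_def by blast
  have bd: "\<bar>integral\<^sup>L (Ms k n) \<phi>\<bar> \<le> B" for k n
  proof -
    interpret real_distribution "Ms k n" by (rule rdk)
    have pu: "measure (Ms k n) UNIV = 1" using prob_space by simp
    have i1: "\<bar>integral\<^sup>L (Ms k n) \<phi>\<bar> \<le> integral\<^sup>L (Ms k n) (\<lambda>x. \<bar>\<phi> x\<bar>)"
      using integral_norm_bound[of "Ms k n" \<phi>] by simp
    have i2: "integral\<^sup>L (Ms k n) (\<lambda>x. \<bar>\<phi> x\<bar>) \<le> integral\<^sup>L (Ms k n) (\<lambda>_. B)"
      by (rule integral_mono) (use integrable_rd[OF rdk c b] b in auto)
    have i3: "integral\<^sup>L (Ms k n) (\<lambda>_. B) = B" using pu by simp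
    show ?thesis using i1 i2 i3 by linarith
  qed
  have "(\<lambda>k. \<integral>n. integral\<^sup>L (Ms k n) \<phi> \<partial>?N) \<longlonglongrightarrow> (\<integral>n. integral\<^sup>L (M n) \<phi> \<partial>?N)"
  proof (rule integral_dominated_convergence[where w="\<lambda>_. B"])
    show "integrable ?N (\<lambda>_. B)"
      by (intro finite_measure.integrable_const prob_space.finite_measure prob_space_measure_pmf)
    show "AE x in ?N. (\<lambda>k. integral\<^sup>L (Ms k x) \<phi>) \<longlonglongrightarrow> integral\<^sup>L (M x) \<phi>"
      using lim by simp
    show "\<And>k. AE x in ?N. norm (integral\<^sup>L (Ms k x) \<phi>) \<le> B" using bd by simp
  qed auto
  then show "(\<lambda>k. integral\<^sup>L (weighted_sum_measure (poisson_weight lam) (Ms k)) \<phi>)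
      \<longlonglongrightarrow> integral\<^sup>L (weighted_sum_measure (poisson_weight lam) M) \<phi>"
    by (simp add: ws_integral[OF lam rdk c b] ws_integral[OF lam rd c b])
qed

theorem theorem6:
  fixes f :: "real \<Rightarrow> real" and a b lam :: real
  assumes "continuous_on UNIV f"
    and "a > 0"
    and "\<And>x. \<bar>f x\<bar> \<le> a * cosh (b * x)"
    and "lam > 0"
  shows "(\<forall>x. \<forall>\<rho>\<in>cs_prob. prob_space (Sigma_x f lam x \<rho>) \<and> sets (Sigma_x f lam x \<rho>) = sets borel)
       \<and> (\<forall>\<rho>\<in>cs_prob. prob_space (Sigma f lam \<rho>) \<and> sets (Sigma f lam \<rho>) = sets borel)
       \<and> (\<forall>x \<rho>s \<rho>. (\<forall>n. \<rho>s n \<in> cs_prob) \<longrightarrow> \<rho> \<in> cs_prob \<longrightarrow> vague_conv \<rho>s \<rho> \<longrightarrow>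
             vague_conv (\<lambda>n. Sigma_x f lam x (\<rho>s n)) (Sigma_x f lam x \<rho>))
       \<and> (\<forall>\<rho>s \<rho>. (\<forall>n. \<rho>s n \<in> cs_prob) \<longrightarrow> \<rho> \<in> cs_prob \<longrightarrow> vague_conv \<rho>s \<rho> \<longrightarrow>
             vague_conv (\<lambda>n. Sigma f lam (\<rho>s n)) (Sigma f lam \<rho>))"
proof -
  have hc: "continuous_on UNIV (\<lambda>y. f y / real (n + 1))" for n
    using assms(1) by (intro continuous_intros) auto
  have rdx: "real_distribution (return borel x)" for x by (simp add: rd_iff prob_space_return)
  have rdp: "real_distribution (conv_pow \<rho> n)" if "real_distribution \<rho>" for \<rho> n
    by (rule real_distribution_conv_pow[OF that])
  have rdMx: "real_distribution (distr (convolution (return borel x) (conv_pow \<rho> n)) borel (\<lambda>y. f y / real (n+1)))"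
    if "real_distribution \<rho>" for \<rho> x n
    by (intro rd_distr real_distribution_conv rdx rdp that hc)
  have rdM: "real_distribution (distr (conv_pow \<rho> (Suc n)) borel (\<lambda>y. f y / real (n+1)))"
    if "real_distribution \<rho>" for \<rho> n
    by (intro rd_distr rdp that hc)
  have wc: "weak_conv_m (\<lambda>k. M) M" for M by (simp add: weak_conv_m_def weak_conv_def)
  have P1: "\<forall>x. \<forall>\<rho>\<in>cs_prob. prob_space (Sigma_x f lam x \<rho>) \<and> sets (Sigma_x f lam x \<rho>) = sets borel"
  proof (intro allI ballI)
    fix x \<rho> assume r: "\<rho> \<in> cs_prob"
    have "real_distribution (Sigma_x f lam x \<rho>)"
      unfolding Sigma_x_def by (intro ws_rd[OF assms(4)] rdMx cs_prob_rd r)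
    then show "prob_space (Sigma_x f lam x \<rho>) \<and> sets (Sigma_x f lam x \<rho>) = sets borel"
      by (simp add: rd_iff)
  qed
  have P2: "\<forall>\<rho>\<in>cs_prob. prob_space (Sigma f lam \<rho>) \<and> sets (Sigma f lam \<rho>) = sets borel"
  proof (intro ballI)
    fix \<rho> assume r: "\<rho> \<in> cs_prob"
    have "real_distribution (Sigma f lam \<rho>)"
      unfolding Sigma_def by (intro ws_rd[OF assms(4)] rdM cs_prob_rd r)
    then show "prob_space (Sigma f lam \<rho>) \<and> sets (Sigma f lam \<rho>) = sets borel"
      by (simp add: rd_iff)
  qed
  have P3: "vague_conv (\<lambda>n. Sigma_x f lam x (\<rho>s n)) (Sigma_x f lam x \<rho>)"
    and P4: "vague_conv (\<lambda>n. Sigma f lam (\<rho>s n)) (Sigma f lam \<rho>)"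
    if rs: "\<forall>n. \<rho>s n \<in> cs_prob" and r: "\<rho> \<in> cs_prob" and v: "vague_conv \<rho>s \<rho>" for x \<rho>s \<rho>
  proof -
    have rdn: "real_distribution (\<rho>s n)" for n using rs cs_prob_rd by blast
    have rd: "real_distribution \<rho>" using r cs_prob_rd by blast
    have w: "weak_conv_m \<rho>s \<rho>"
      by (rule bweak_imp_weak[OF rdn rd vague_imp_bweak]) (use rs r v in auto)
    have wp: "weak_conv_m (\<lambda>k. conv_pow (\<rho>s k) n) (conv_pow \<rho> n)" for n
      by (rule weak_conv_conv_pow[OF rdn rd w])
    show "vague_conv (\<lambda>n. Sigma_x f lam x (\<rho>s n)) (Sigma_x f lam x \<rho>)"
      unfolding Sigma_x_def
    proof (rule ws_conv[OF assms(4)])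
      show "weak_conv_m (\<lambda>k. distr (return borel x \<star> conv_pow (\<rho>s k) n) borel (\<lambda>y. f y / real (n + 1)))
          (distr (return borel x \<star> conv_pow \<rho> n) borel (\<lambda>y. f y / real (n + 1)))" for n
        by (intro weak_conv_distr weak_conv_conv rdx rdp rdn rd wc wp hc real_distribution_conv)
    qed (intro rdMx rdn rd)+
    show "vague_conv (\<lambda>n. Sigma f lam (\<rho>s n)) (Sigma f lam \<rho>)"
      unfolding Sigma_def
    proof (rule ws_conv[OF assms(4)])
      show "weak_conv_m (\<lambda>k. distr (conv_pow (\<rho>s k) (Suc n)) borel (\<lambda>y. f y / real (n + 1)))
          (distr (conv_pow \<rho> (Suc n)) borel (\<lambda>y. f y / real (n + 1)))" for n
        by (intro weak_conv_distr rdp rdn rd wp hc)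
    qed (intro rdM rdn rd)+
  qed
  show ?thesis using P1 P2 P3 P4 by blast
qed

end
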